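(* (1) Let $(X,* )$ be a semi-group satisfying $a*b*b*c=a*b*c$ for all $a,b,c\in X$. Then the zeroth lbo homology group is $H_0(X)=\mathbb{Z}X/\!\sim$, the free abelian group on the equivalence classes of the equivalence relation $\sim$ on $X$ generated by $a\sim b$ whenever there exist $x,y\in X$ with $a=x*y*x$ and $b=y*x*y$. (2) Let $(X,* )$ be a proto unital shelf or an idempotent semi-group. Then $H_0(X)=\mathbb{Z}X/\!\approx$, where $\approx$ is the equivalence relation on $X$ generated by $a\approx b$ whenever there exist $x,y\in X$ with $a=x*y$ and $b=y*x$. In particular, if $(X,* )$ is commutative, $H_0(X)=\mathbb{Z}X$.
   Context: For a semi-group $(X,* )$ satisfying $a*b*b*c=a*b*c$ (this includes associative shelves, proto unital shelves and idempotent semi-groups), the lbo chain complex has $C_n=\mathbb{Z}X^{n+1}$ ($n\ge0$) and $\partial_n=\sum_{i=0}^n(-1)^id_i$, where $d_0(x_0,\dots,x_n)=(x_0*x_1,x_2,\dots,x_{n-1},x_n*x_0)$, $d_n(x_0,\dots,x_n)=(x_n*x_0,x_1,\dots,x_{n-2},x_{n-1}*x_n)$, and for $0<i<n$, $d_i(x_0,\dots,x_n)=(x_0,\dots,x_{i-1}*x_i,x_i*x_{i+1},\dots,x_n)$; in particular $\partial_1(x_0,x_1)=x_0*x_1*x_0-x_1*x_0*x_1\in\mathbb{Z}X$. The lbo homology $H_n(X)$ is the homology of this complex, so $H_0(X)=\mathbb{Z}X/\operatorname{im}\partial_1$. A shelf is a set with operation satisfying $(a*b)*c=(a*c)*(b*c)$;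 a proto unital shelf is a shelf with $a*b=b*(a*b)$ and $a*b=(a*b)*b$ for all $a,b$ (these are associative). An idempotent semi-group is an associative magma with $a*a=a$ for all $a$. *)

theory Defs
  imports "HOL-Algebra.Free_Abelian_Groups"
begin

text \<open>The free abelian group ZX is modelled by the type 'a =>0 int,
  i.e. the group free_Abelian_group UNIV. C_0 = Z X and C_1 = Z (X x X).\<close>

definition lbo_boundary1 :: "('a \<Rightarrow> 'a \<Rightarrow> 'a) \<Rightarrow> (('a \<times> 'a) \<Rightarrow>\<^sub>0 int) \<Rightarrow> ('a \<Rightarrow>\<^sub>0 int)" where
  "lbo_boundary1 f =
     frag_extend (\<lambda>(x0, x1). frag_of (f (f x0 x1) x0) - frag_of (f (f x1 x0) x1))"

definition lbo_B0 :: "('a \<Rightarrow> 'a \<Rightarrow> 'a) \<Rightarrow> ('a \<Rightarrow>\<^sub>0 int) set" where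
  "lbo_B0 f = range (lbo_boundary1 f)"

text \<open>Zeroth lbo homology H_0(X) = C_0 / im d_1 (C_0 = ZX, since d_0 = 0).\<close>
definition lbo_H0 :: "('a \<Rightarrow> 'a \<Rightarrow> 'a) \<Rightarrow> (('a \<Rightarrow>\<^sub>0 int) set) monoid" where
  "lbo_H0 f = free_Abelian_group UNIV Mod lbo_B0 f"

definition class_map :: "('a \<Rightarrow> 'a \<Rightarrow> bool) \<Rightarrow> ('a \<Rightarrow>\<^sub>0 int) \<Rightarrow> ('a set \<Rightarrow>\<^sub>0 int)" where
  "class_map R = frag_extend (\<lambda>a. frag_of ({(u, v). equivclp R u v} `` {a}))"

definition H0_is_free_on_classes :: "('a \<Rightarrow> 'a \<Rightarrow> 'a) \<Rightarrow> ('a \<Rightarrow> 'a \<Rightarrow> bool) \<Rightarrow> bool" where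
  "H0_is_free_on_classes f R \<longleftrightarrow>
     lbo_B0 f = kernel (free_Abelian_group UNIV)
                       (free_Abelian_group (UNIV // {(u, v). equivclp R u v})) (class_map R)
     \<and> lbo_H0 f \<cong> free_Abelian_group (UNIV // {(u, v). equivclp R u v})"

definition is_semigroup :: "('a \<Rightarrow> 'a \<Rightarrow> 'a) \<Rightarrow> bool" where
  "is_semigroup f \<longleftrightarrow> (\<forall>a b c. f (f a b) c = f a (f b c))"

definition is_shelf :: "('a \<Rightarrow> 'a \<Rightarrow> 'a) \<Rightarrow> bool" where
  "is_shelf f \<longleftrightarrow> (\<forall>a b c. f (f a b) c = f (f a c) (f b c))"

definition is_proto_unital_shelf :: "('a \<Rightarrow> 'a \<Rightarrow> 'a) \<Rightarrow> bool" where
  "is_proto_unital_shelf f \<longleftrightarrow> is_shelf f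
     \<and> (\<forall>a b. f a b = f b (f a b)) \<and> (\<forall>a b. f a b = f (f a b) b)"

definition is_idempotent_semigroup :: "('a \<Rightarrow> 'a \<Rightarrow> 'a) \<Rightarrow> bool" where
  "is_idempotent_semigroup f \<longleftrightarrow> is_semigroup f \<and> (\<forall>a. f a a = a)"

end

theory Submission
  imports Defs
begin

lemma equivclp_class_eq:
  assumes "equivclp R a b"
  shows "{(u, v). equivclp R u v} `` {a} = {(u, v). equivclp R u v} `` {b}"
proof -
  have "equivclp R a v \<longleftrightarrow> equivclp R b v" for v
    using assms by (meson equivclp_sym transpD transp_equivclp)
  then show ?thesis by auto
qed

lemma general_H0:
  fixes g :: "'a \<Rightarrow> 'a \<Rightarrow> 'a" and R :: "'a \<Rightarrow> 'a \<Rightarrow> bool" and f :: "'a \<Rightarrow> 'a \<Rightarrow> 'a"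
  assumes ER: "equivclp R = equivclp (\<lambda>a b. \<exists>x y. a = g x y \<and> b = g y x)"
    and bdf: "lbo_boundary1 f = frag_extend (\<lambda>(x0, x1). frag_of (g x0 x1) - frag_of (g x1 x0))"
  shows "H0_is_free_on_classes f R"
proof -
  define bd where "bd = frag_extend (\<lambda>(x0, x1). frag_of (g x0 x1) - frag_of (g x1 x0))"
  define E where "E = {(u, v). equivclp R u v}"
  define q where "q a = E `` {a}" for a
  define rep where "rep C = (SOME a. a \<in> C)" for C :: "'a set"
  define s where "s = frag_extend (\<lambda>C. frag_of (rep C))"
  have cm: "class_map R = frag_extend (\<lambda>a. frag_of (q a))"
    unfolding class_map_def q_def E_def ..
  have qeq: "q a = q b" if "equivclp R a b" for a b
    using equivclp_class_eq[OF that] unfolding q_def E_def .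
  have bd_diff: "bd a - bd b = bd (a - b)" for a b
    unfolding bd_def by (simp add: frag_extend_diff)
  have c1: "class_map R (bd c) = 0" for c
  proof -
    have "Poly_Mapping.keys c \<subseteq> UNIV" by simp
    then show ?thesis
    proof (induction c rule: frag_induction)
      case zero then show ?case by (simp add: bd_def cm)
    next
      case (one x)
      obtain x0 x1 where x: "x = (x0, x1)" by fastforce
      have "equivclp (\<lambda>a b. \<exists>x y. a = g x y \<and> b = g y x) (g x0 x1) (g x1 x0)"
        by (rule r_into_rtranclp[where r="symclp _", folded equivclp_def]) (auto simp: symclp_def)
      then have "q (g x0 x1) = q (g x1 x0)" using ER qeq by metis
      then show ?case by (simp add: x bd_def cm frag_extend_diff)
    next
      case (diff a b)
      then show ?case by (metis bd_diff cm diff_zero frag_extend_diff)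
    qed
  qed
  have c3: "frag_of a - frag_of b \<in> range bd" if "equivclp R a b" for a b
  proof -
    have "equivclp (\<lambda>a b. \<exists>x y. a = g x y \<and> b = g y x) a b" using that ER by simp
    then show ?thesis unfolding equivclp_def
    proof (induction rule: rtranclp_induct)
      case base
      then show ?case by (metis bd_diff diff_self rangeI)
    next
      case (step y z)
      have "frag_of y - frag_of z \<in> range bd"
      proof -
        from step(2) obtain x0 x1 where "(y = g x0 x1 \<and> z = g x1 x0) \<or> (z = g x0 x1 \<and> y = g x1 x0)"
          by (auto simp: symclp_def)
        then show ?thesis
        proof
          assume h: "y = g x0 x1 \<and> z = g x1 x0"
          have "bd (frag_of (x0, x1)) = frag_of y - frag_of z" using h by (simp add: bd_def)
          then show ?thesis by (metis rangeI)
        next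
          assume h: "z = g x0 x1 \<and> y = g x1 x0"
          have "bd (frag_of (x1, x0)) = frag_of y - frag_of z" using h by (simp add: bd_def)
          then show ?thesis by (metis rangeI)
        qed
      qed
      then obtain p where p: "bd p = frag_of y - frag_of z" by auto
      from step(3) obtain p' where p': "bd p' = frag_of a - frag_of y" by auto
      have "bd (p' + p) = frag_of a - frag_of z"
      proof -
        have "bd (p' + p) = bd p' + bd p" by (simp add: bd_def frag_extend_add)
        then show ?thesis using p p' by simp
      qed
      then show ?case by (metis rangeI)
    qed
  qed
  have equivE: "equiv UNIV E"
    unfolding E_def using equivp_evquivclp[of R]
    by (simp add: equivp_def equiv_def refl_on_def sym_def trans_def)
  have rep_in: "rep (q a) \<in> q a" for a
  proof -
    have "a \<in> q a" using equivE unfolding q_def E_def by simp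
    then show ?thesis unfolding rep_def by (metis someI)
  qed
  have qrep: "q (rep C) = C" if "C \<in> UNIV // E" for C
  proof -
    from that obtain a where C: "C = q a" unfolding q_def by (auto elim: quotientE)
    have "(a, rep C) \<in> E" using rep_in[of a] C unfolding q_def by simp
    then have "q (rep C) = q a" unfolding q_def using equivE
      by (metis equiv_class_eq_iff)
    then show ?thesis using C by simp
  qed
  have c4: "c - s (class_map R c) \<in> range bd" for c
  proof -
    have sc: "s (class_map R c) = frag_extend (\<lambda>a. frag_of (rep (q a))) c"
      unfolding s_def cm using frag_extend_compose[of "\<lambda>C. frag_of (rep C)" q c]
      by (simp add: o_def)
    have "Poly_Mapping.keys c \<subseteq> UNIV" by simp
    then have "c - frag_extend (\<lambda>a. frag_of (rep (q a))) c \<in> range bd"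
    proof (induction c rule: frag_induction)
      case zero
      then show ?case by (metis bd_diff diff_self diff_zero frag_extend_0 rangeI)
    next
      case (one x)
      have "(x, rep (q x)) \<in> E" using rep_in[of x] unfolding q_def by simp
      then show ?case using c3 unfolding E_def by simp
    next
      case (diff a b)
      from diff obtain pa pb where "bd pa = a - frag_extend (\<lambda>a. frag_of (rep (q a))) a"
        "bd pb = b - frag_extend (\<lambda>a. frag_of (rep (q a))) b" by (metis imageE)
      then have "bd (pa - pb) = a - b - frag_extend (\<lambda>a. frag_of (rep (q a))) (a - b)"
        by (simp add: frag_extend_diff flip: bd_diff)
      then show ?case by (metis rangeI)
    qed
    then show ?thesis using sc by simp
  qed
  have keq: "kernel (free_Abelian_group UNIV) (free_Abelian_group (UNIV // E)) (class_map R)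
            = {c. class_map R c = 0}"
    by (simp add: kernel_def)
  have B: "range bd = kernel (free_Abelian_group UNIV) (free_Abelian_group (UNIV // E)) (class_map R)"
  proof
    show "range bd \<subseteq> kernel (free_Abelian_group UNIV) (free_Abelian_group (UNIV // E)) (class_map R)"
      using c1 keq by auto
  next
    show "kernel (free_Abelian_group UNIV) (free_Abelian_group (UNIV // E)) (class_map R) \<subseteq> range bd"
    proof
      fix c assume "c \<in> kernel (free_Abelian_group UNIV) (free_Abelian_group (UNIV // E)) (class_map R)"
      then have "class_map R c = 0" using keq by auto
      then have "s (class_map R c) = 0" by (simp add: s_def)
      then show "c \<in> range bd" using c4[of c] by simp
    qed
  qed
  have hom: "class_map R \<in> hom (free_Abelian_group UNIV) (free_Abelian_group (UNIV // E))"
  proof (rule homI)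
    fix x :: "'a \<Rightarrow>\<^sub>0 int"
    have "Poly_Mapping.keys (class_map R x) \<subseteq> (\<Union>a \<in> Poly_Mapping.keys x. Poly_Mapping.keys (frag_of (q a)))"
      unfolding cm by (rule keys_frag_extend)
    also have "\<dots> \<subseteq> UNIV // E" unfolding q_def by (auto intro: quotientI)
    finally show "class_map R x \<in> carrier (free_Abelian_group (UNIV // E))" by simp
  next
    fix x y :: "'a \<Rightarrow>\<^sub>0 int"
    show "class_map R (x \<otimes>\<^bsub>free_Abelian_group UNIV\<^esub> y) =
          class_map R x \<otimes>\<^bsub>free_Abelian_group (UNIV // E)\<^esub> class_map R y"
      by (simp add: cm frag_extend_add)
  qed
  have gh: "group_hom (free_Abelian_group UNIV) (free_Abelian_group (UNIV // E)) (class_map R)"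
    using hom by (simp add: group_hom_def group_hom_axioms_def)
  have surj: "class_map R ` carrier (free_Abelian_group UNIV) = carrier (free_Abelian_group (UNIV // E))"
  proof
    show "class_map R ` carrier (free_Abelian_group UNIV) \<subseteq> carrier (free_Abelian_group (UNIV // E))"
      using hom by (auto simp: hom_def)
  next
    show "carrier (free_Abelian_group (UNIV // E)) \<subseteq> class_map R ` carrier (free_Abelian_group UNIV)"
    proof
      fix d assume d: "d \<in> carrier (free_Abelian_group (UNIV // E))"
      have "class_map R (s d) = frag_extend (\<lambda>C. frag_of (q (rep C))) d"
        unfolding s_def cm using frag_extend_compose[of "\<lambda>a. frag_of (q a)" rep d]
        by (simp add: o_def)
      also have "\<dots> = frag_extend frag_of d"
        by (rule frag_extend_eq) (use d qrep in auto)
      also have "\<dots> = d" by (metis frag_expansion)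
      finally show "d \<in> class_map R ` carrier (free_Abelian_group UNIV)"
        by (metis UNIV_I carrier_free_Abelian_group_iff image_eqI subsetI)
    qed
  qed
  have ISO: "free_Abelian_group UNIV Mod kernel (free_Abelian_group UNIV) (free_Abelian_group (UNIV // E)) (class_map R)
        \<cong> free_Abelian_group (UNIV // E)"
    by (rule group_hom.FactGroup_iso[OF gh surj])
  have LB: "lbo_B0 f = range bd" unfolding lbo_B0_def bdf bd_def ..
  have B2: "lbo_B0 f = kernel (free_Abelian_group UNIV) (free_Abelian_group (UNIV // E)) (class_map R)"
    using LB B by (rule trans)
  have ISO2: "lbo_H0 f \<cong> free_Abelian_group (UNIV // E)"
    unfolding lbo_H0_def B2 by (rule ISO)
  show ?thesis unfolding H0_is_free_on_classes_def
    using B2 ISO2 unfolding E_def by (rule conjI)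
qed

lemma equivclp_le_equivclp:
  assumes "\<And>a b. R a b \<Longrightarrow> equivclp S a b"
  shows "equivclp R a b \<Longrightarrow> equivclp S a b"
  unfolding equivclp_def[of R]
proof (induction rule: rtranclp_induct)
  case base then show ?case by (simp add: reflpD)
next
  case (step y z)
  have "equivclp S y z" using step(2) assms by (auto simp: symclp_def intro: equivclp_sym)
  then show ?case using step(3) by (meson transpD transp_equivclp)
qed

lemma equivclp_eqI:
  assumes "\<And>a b. R a b \<Longrightarrow> equivclp S a b" "\<And>a b. S a b \<Longrightarrow> equivclp R a b"
  shows "equivclp R = equivclp S"
  using equivclp_le_equivclp[of R S] equivclp_le_equivclp[of S R] assms by (intro ext iffI) blast+

lemma proto_id:
  assumes "is_proto_unital_shelf f"
  shows "f (f x y) x = f y x"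
  using assms unfolding is_proto_unital_shelf_def is_shelf_def by metis

lemma idem_ids:
  assumes "is_idempotent_semigroup f"
  shows "f x (f x y) = f x y" "f (f x y) y = f x y"
    "f (f (f x y) (f y x)) (f x y) = f x y"
proof -
  have A: "f (f a b) c = f a (f b c)" for a b c
    using assms unfolding is_idempotent_semigroup_def is_semigroup_def by blast
  have I: "f a a = a" for a
    using assms unfolding is_idempotent_semigroup_def by blast
  have I2: "f a (f a b) = f a b" for a b by (metis A I)
  show 1: "f x (f x y) = f x y" by (rule I2)
  show "f (f x y) y = f x y" by (metis A I)
  have "f (f (f x y) (f y x)) (f x y) = f x (f y (f y (f x (f x y))))" by (simp only: A)
  also have "\<dots> = f x (f y (f x y))" by (simp only: I2)
  also have "\<dots> = f (f x y) (f x y)" by (simp only: A)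
  also have "\<dots> = f x y" by (simp only: I)
  finally show "f (f (f x y) (f y x)) (f x y) = f x y" .
qed

lemma equivclp_R3_R2:
  assumes "is_proto_unital_shelf f \<or> is_idempotent_semigroup f"
  shows "equivclp (\<lambda>a b. \<exists>x y. a = f x y \<and> b = f y x)
       = equivclp (\<lambda>a b. \<exists>x y. a = f (f x y) x \<and> b = f (f y x) y)"
  using assms
proof
  assume p: "is_proto_unital_shelf f"
  have "(\<lambda>a b. \<exists>x y. a = f (f x y) x \<and> b = f (f y x) y) = (\<lambda>a b. \<exists>x y. a = f y x \<and> b = f x y)"
    by (simp add: proto_id[OF p])
  also have "\<dots> = (\<lambda>a b. \<exists>x y. a = f x y \<and> b = f y x)" by blast
  finally show ?thesis by simp
next
  assume i: "is_idempotent_semigroup f"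
  have assoc: "f (f a b) c = f a (f b c)" for a b c
    using i unfolding is_idempotent_semigroup_def is_semigroup_def by blast
  let ?R2 = "\<lambda>a b. \<exists>x y. a = f x y \<and> b = f y x"
  let ?R3 = "\<lambda>a b. \<exists>x y. a = f (f x y) x \<and> b = f (f y x) y"
  have r2: "equivclp ?R2 (f x y) (f y x)" for x y
    by (rule r_into_rtranclp[where r="symclp _", folded equivclp_def]) (auto simp: symclp_def)
  have r3: "equivclp ?R3 (f (f x y) x) (f (f y x) y)" for x y
    by (rule r_into_rtranclp[where r="symclp _", folded equivclp_def]) (auto simp: symclp_def)
  show ?thesis
  proof (rule equivclp_eqI)
    fix a b assume "?R2 a b"
    then obtain x y where ab: "a = f x y" "b = f y x" by blast
    have "equivclp ?R3 (f (f (f x y) (f y x)) (f x y)) (f (f (f y x) (f x y)) (f y x))"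
      by (rule r3)
    then show "equivclp ?R3 a b"
      unfolding ab idem_ids(3)[OF i, of x y] idem_ids(3)[OF i, of y x] .
  next
    fix a b assume "?R3 a b"
    then obtain x y where ab: "a = f (f x y) x" "b = f (f y x) y" by blast
    have 1: "equivclp ?R2 (f (f x y) x) (f x y)"
      using r2[of "f x y" x] unfolding idem_ids(1)[OF i, of x y] .
    have 2: "equivclp ?R2 (f y x) (f (f y x) y)"
      using r2[of y "f y x"] unfolding idem_ids(1)[OF i, of y x] .
    have t: "equivclp ?R2 u w" if "equivclp ?R2 u v" "equivclp ?R2 v w" for u v w
      by (rule transpD[OF transp_equivclp, OF that])
    show "equivclp ?R2 a b" unfolding ab by (rule t[OF t[OF 1 r2[of x y]] 2])
  qed
qed

theorem proposition2p2:
  shows "(\<forall>f :: 'a \<Rightarrow> 'a \<Rightarrow> 'a.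
            is_semigroup f \<and> (\<forall>a b c. f (f (f a b) b) c = f (f a b) c) \<longrightarrow>
            H0_is_free_on_classes f (\<lambda>a b. \<exists>x y. a = f (f x y) x \<and> b = f (f y x) y))
       \<and> (\<forall>f :: 'a \<Rightarrow> 'a \<Rightarrow> 'a.
            is_proto_unital_shelf f \<or> is_idempotent_semigroup f \<longrightarrow>
            H0_is_free_on_classes f (\<lambda>a b. \<exists>x y. a = f x y \<and> b = f y x))
       \<and> (\<forall>f :: 'a \<Rightarrow> 'a \<Rightarrow> 'a.
            (is_proto_unital_shelf f \<or> is_idempotent_semigroup f) \<and> (\<forall>a b. f a b = f b a) \<longrightarrow>
            lbo_B0 f = {0} \<and> lbo_H0 f \<cong> free_Abelian_group (UNIV :: 'a set))"
proof (intro conjI allI impI)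
  fix f :: "'a \<Rightarrow> 'a \<Rightarrow> 'a"
  show "H0_is_free_on_classes f (\<lambda>a b. \<exists>x y. a = f (f x y) x \<and> b = f (f y x) y)"
    by (rule general_H0[of _ "\<lambda>x y. f (f x y) x", OF refl]) (simp add: lbo_boundary1_def)
next
  fix f :: "'a \<Rightarrow> 'a \<Rightarrow> 'a"
  assume a: "is_proto_unital_shelf f \<or> is_idempotent_semigroup f"
  show "H0_is_free_on_classes f (\<lambda>a b. \<exists>x y. a = f x y \<and> b = f y x)"
    by (rule general_H0[of _ "\<lambda>x y. f (f x y) x", OF equivclp_R3_R2[OF a]]) (simp add: lbo_boundary1_def)
next
  fix f :: "'a \<Rightarrow> 'a \<Rightarrow> 'a"
  assume a: "(is_proto_unital_shelf f \<or> is_idempotent_semigroup f) \<and> (\<forall>a b. f a b = f b a)"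
  have sym: "f (f x y) x = f (f y x) y" for x y
    using a
  proof (elim conjE disjE)
    assume "is_proto_unital_shelf f" "\<forall>a b. f a b = f b a"
    then show ?thesis using proto_id by metis
  next
    assume i: "is_idempotent_semigroup f" and c: "\<forall>a b. f a b = f b a"
    have "f (f x y) x = f x (f x y)" using c by metis
    also have "\<dots> = f x y" using idem_ids(1)[OF i] .
    finally have "f (f x y) x = f x y" .
    moreover have "f (f y x) y = f y (f y x)" using c by metis
    moreover have "f y (f y x) = f y x" using idem_ids(1)[OF i] .
    moreover have "f y x = f x y" using c by metis
    ultimately show ?thesis by simp
  qed
  have z: "lbo_boundary1 f c = 0" for c
    unfolding lbo_boundary1_def by (rule frag_extend_eq_0) (auto simp: sym)
  show B: "lbo_B0 f = {0}"
    unfolding lbo_B0_def using z by auto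
  have gh: "group_hom (free_Abelian_group (UNIV::'a set)) (free_Abelian_group UNIV) id"
    by (simp add: group_hom_def group_hom_axioms_def group_hom_free_Abelian_groups_id)
  have k: "kernel (free_Abelian_group (UNIV::'a set)) (free_Abelian_group UNIV) id = {0}"
    by (auto simp: kernel_def)
  have "free_Abelian_group (UNIV::'a set) Mod kernel (free_Abelian_group (UNIV::'a set)) (free_Abelian_group (UNIV::'a set)) id
        \<cong> free_Abelian_group (UNIV::'a set)"
    using group_hom.FactGroup_iso[OF gh] by simp
  then show "lbo_H0 f \<cong> free_Abelian_group (UNIV :: 'a set)"
    unfolding lbo_H0_def B k .
qed

end
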